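(* Let $K\le P$ be positive integers, $\theta=(K,P)$, and $n\ge 3$. Then $\mathbb{E}[\chi_{123}(\theta)]=\beta(\theta)$, and consequently $\mathbb{E}[T_n(\theta)]=\binom{n}{3}\beta(\theta)$.
   Context: Random key graph: fix positive integers $K\le P$ and write $\theta=(K,P)$. For $n\ge 3$, let $K_1(\theta),\dots,K_n(\theta)$ be i.i.d. random subsets of $\{1,\dots,P\}$, each uniformly distributed over the $\binom{P}{K}$ subsets of size $K$. The random key graph $\mathbb{K}(n;\theta)$ on vertex set $\{1,\dots,n\}$ has an edge between distinct $i,j$ iff $K_i(\theta)\cap K_j(\theta)\neq\emptyset$. Define $q(\theta)=\binom{P-K}{K}/\binom{P}{K}$ if $2K\le P$ and $q(\theta)=0$ if $P<2K$ (so $q(\theta)$ is the probability that two given nodes are not adjacent); $p(\theta)=1-q(\theta)$; $r(\theta)=\binom{P-2K}{K}/\binom{P}{K}$ if $3K\le P$ and $r(\theta)=0$ if $P<3K$; $\beta(\theta)=(1-q(\theta))^3+q(\theta)^3-q(\theta)r(\theta)$. For distinct $i,j,k$, $\chi_{ijk}(\theta)$ is the indicator that nodes $i,j,k$ form a triangle in $\mathbb{K}(n;\theta)$, and $T_n(\theta)=\sum_{1\le i<j<k\le n}\chi_{ijk}(\theta)$ is the number of triangles. *)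

theory Defs
  imports "HOL-Probability.Probability"
begin

definition key_ring_pmf :: "nat \<Rightarrow> nat \<Rightarrow> nat set pmf" where
  "key_ring_pmf K P = pmf_of_set {S. S \<subseteq> {1..P} \<and> card S = K}"

definition key_rings_pmf :: "nat \<Rightarrow> nat \<Rightarrow> nat \<Rightarrow> (nat \<Rightarrow> nat set) pmf" where
  "key_rings_pmf n K P = Pi_pmf {1..n} {} (\<lambda>_. key_ring_pmf K P)"

definition rkg_adj :: "(nat \<Rightarrow> nat set) \<Rightarrow> nat \<Rightarrow> nat \<Rightarrow> bool" where
  "rkg_adj Ks i j \<longleftrightarrow> i \<noteq> j \<and> Ks i \<inter> Ks j \<noteq> {}"

definition chi :: "(nat \<Rightarrow> nat set) \<Rightarrow> nat \<Rightarrow> nat \<Rightarrow> nat \<Rightarrow> real" where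
  "chi Ks i j k = (if rkg_adj Ks i j \<and> rkg_adj Ks j k \<and> rkg_adj Ks i k then 1 else 0)"

definition triangles :: "nat \<Rightarrow> (nat \<Rightarrow> nat set) \<Rightarrow> real" where
  "triangles n Ks = (\<Sum>(i,j,k) \<in> {(i,j,k). 1 \<le> i \<and> i < j \<and> j < k \<and> k \<le> n}. chi Ks i j k)"

definition q_rkg :: "nat \<Rightarrow> nat \<Rightarrow> real" where
  "q_rkg K P = (if 2 * K \<le> P then real ((P - K) choose K) / real (P choose K) else 0)"

definition p_rkg :: "nat \<Rightarrow> nat \<Rightarrow> real" where
  "p_rkg K P = 1 - q_rkg K P"

definition r_rkg :: "nat \<Rightarrow> nat \<Rightarrow> real" where
  "r_rkg K P = (if 3 * K \<le> P then real ((P - 2 * K) choose K) / real (P choose K) else 0)"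

definition beta_rkg :: "nat \<Rightarrow> nat \<Rightarrow> real" where
  "beta_rkg K P = (1 - q_rkg K P) ^ 3 + q_rkg K P ^ 3 - q_rkg K P * r_rkg K P"

end

theory Submission imports Defs begin

lemma sum_ind: "finite S \<Longrightarrow> (\<Sum>c\<in>S. if Q c then 1 else 0 :: real) = real (card {c\<in>S. Q c})"
  by (simp add: sum.If_cases Int_def conj_commute)

lemma marg:
  fixes A :: "'a set" and S :: "'b set"
  assumes A: "finite A" "i \<in> A" "j \<in> A" "k \<in> A" "i \<noteq> j" "j \<noteq> k" "i \<noteq> k"
    and S: "finite S" "S \<noteq> {}"
  shows "map_pmf (\<lambda>f. (f i, f j, f k)) (Pi_pmf A d (\<lambda>_. pmf_of_set S)) = pmf_of_set (S \<times> S \<times> S)"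
proof (rule pmf_eqI)
  fix x :: "'b \<times> 'b \<times> 'b"
  obtain a b c where x: "x = (a,b,c)" by (cases x) auto
  have Aeq: "A = insert i (insert j (insert k (A - {i,j,k})))" using A by auto
  define B where "B = (\<lambda>y. if y = i then {a} else if y = j then {b} else if y = k then {c} else UNIV)"
  have pre: "(\<lambda>f. (f i, f j, f k)) -` {x} = Pi A B"
  proof (rule set_eqI)
    fix f :: "'a \<Rightarrow> 'b"
    have "f \<in> Pi A B \<longleftrightarrow> (\<forall>y\<in>A. f y \<in> B y)" by (rule Pi_iff)
    also have "\<dots> \<longleftrightarrow> f i = a \<and> f j = b \<and> f k = c"
    proof
      assume "\<forall>y\<in>A. f y \<in> B y"
      then have "f i \<in> B i" "f j \<in> B j" "f k \<in> B k" using A by auto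
      then show "f i = a \<and> f j = b \<and> f k = c" using A by (simp add: B_def)
    next
      assume "f i = a \<and> f j = b \<and> f k = c"
      then show "\<forall>y\<in>A. f y \<in> B y" by (simp add: B_def)
    qed
    finally show "f \<in> (\<lambda>f. (f i, f j, f k)) -` {x} \<longleftrightarrow> f \<in> Pi A B" by (simp add: x)
  qed
  have "pmf (map_pmf (\<lambda>f. (f i, f j, f k)) (Pi_pmf A d (\<lambda>_. pmf_of_set S))) x
     = measure_pmf.prob (Pi_pmf A d (\<lambda>_. pmf_of_set S)) (Pi A B)"
    by (simp add: pmf_map pre)
  also have "\<dots> = (\<Prod>y\<in>A. measure_pmf.prob (pmf_of_set S) (B y))"
    using A by (simp add: measure_Pi_pmf_Pi)
  also have "(\<Prod>y\<in>A. measure_pmf.prob (pmf_of_set S) (B y))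
     = measure_pmf.prob (pmf_of_set S) {a} * measure_pmf.prob (pmf_of_set S) {b} * measure_pmf.prob (pmf_of_set S) {c}"
    apply (subst Aeq) using A by (simp add: B_def)
  also have "\<dots> = pmf (pmf_of_set (S \<times> S \<times> S)) x"
    using S by (simp add: x measure_pmf_single indicator_def card_cartesian_product)
  finally show "pmf (map_pmf (\<lambda>f. (f i, f j, f k)) (Pi_pmf A d (\<lambda>_. pmf_of_set S))) x = pmf (pmf_of_set (S \<times> S \<times> S)) x" .
qed


definition dj :: "nat set \<Rightarrow> nat set \<Rightarrow> real" where
  "dj a b = (if a \<inter> b = {} then 1 else 0)"

lemma count_disj:
  assumes "a \<subseteq> {1..P}"
  shows "card {c \<in> {S. S \<subseteq> {1..P} \<and> card S = K}. c \<inter> a = {}} = (P - card a) choose K"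
proof -
  have "{c \<in> {S. S \<subseteq> {1..P} \<and> card S = K}. c \<inter> a = {}} = {c. c \<subseteq> {1..P} - a \<and> card c = K}"
    by auto
  moreover have "card ({1..P} - a) = P - card a"
    using assms by (simp add: card_Diff_subset finite_subset)
  ultimately show ?thesis by (simp add: n_subsets)
qed

lemma sum_dj:
  assumes "a \<subseteq> {1..P}"
  shows "(\<Sum>c\<in>{S. S \<subseteq> {1..P} \<and> card S = K}. dj a c) = real ((P - card a) choose K)"
proof -
  have "(\<Sum>c\<in>{S. S \<subseteq> {1..P} \<and> card S = K}. dj a c)
      = real (card {c \<in> {S. S \<subseteq> {1..P} \<and> card S = K}. c \<inter> a = {}})"
    unfolding dj_def by (subst sum_ind) (auto simp: Int_commute)
  then show ?thesis using count_disj[OF assms] by simp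
qed

lemma triple_sum:
  fixes K P :: nat
  defines "S \<equiv> {A. A \<subseteq> {1..P} \<and> card A = K}"
  defines "N \<equiv> real (card S)" and "M \<equiv> real ((P - K) choose K)" and "R \<equiv> real ((P - 2*K) choose K)"
  shows "(\<Sum>a\<in>S. \<Sum>b\<in>S. \<Sum>c\<in>S. 1 - dj a b - dj b c - dj a c + dj a b * dj b c + dj a b * dj a c
            + dj a c * dj b c - dj a b * (dj a c * dj b c))
         = N * (N*N - 3*N*M + 3*M*M - M*R)"
proof -
  have finS: "finite S" unfolding S_def by (rule finite_subset[of _ "Pow {1..P}"]) auto
  have c1: "(\<Sum>c\<in>S. dj a c) = M" if "a \<in> S" for a
    using that sum_dj[of a P K] unfolding S_def M_def by auto
  have c2: "(\<Sum>c\<in>S. dj c a) = M" if "a \<in> S" for a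
    using c1[OF that] by (simp add: dj_def Int_commute)
  have c3: "dj a b * (\<Sum>c\<in>S. dj a c * dj b c) = dj a b * R" if "a \<in> S" "b \<in> S" for a b
  proof (cases "a \<inter> b = {}")
    case True
    have "(\<Sum>c\<in>S. dj a c * dj b c) = (\<Sum>c\<in>S. dj (a \<union> b) c)"
      by (intro sum.cong) (auto simp: dj_def)
    also have "\<dots> = real ((P - card (a \<union> b)) choose K)"
      using that sum_dj[of "a \<union> b" P K] unfolding S_def by auto
    also have "card (a \<union> b) = 2 * K"
    proof -
      have "finite a" "finite b" using that unfolding S_def by (auto intro: finite_subset)
      then show ?thesis using that True card_Un_disjoint[of a b] unfolding S_def by simp
    qed
    finally show ?thesis by (simp add: R_def)
  qed (simp add: dj_def)
  have inner: "(\<Sum>c\<in>S. 1 - dj a b - dj b c - dj a c + dj a b * dj b c + dj a b * dj a c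
            + dj a c * dj b c - dj a b * (dj a c * dj b c))
     = N - N * dj a b - 2*M + 2 * dj a b * M + (\<Sum>c\<in>S. dj a c * dj b c) - dj a b * R"
    if "a \<in> S" "b \<in> S" for a b
  proof -
    have e1: "(\<Sum>c\<in>S. dj a b * dj b c) = dj a b * M" using c1[OF that(2)] by (simp add: sum_distrib_left[symmetric])
    have e2: "(\<Sum>c\<in>S. dj a b * dj a c) = dj a b * M" using c1[OF that(1)] by (simp add: sum_distrib_left[symmetric])
    have e3: "(\<Sum>c\<in>S. dj a b * (dj a c * dj b c)) = dj a b * R" using c3[OF that] by (simp add: sum_distrib_left[symmetric])
    have e4: "(\<Sum>c\<in>S. dj a b) = N * dj a b" by (simp add: N_def)
    have e5: "(\<Sum>c\<in>S. (1::real)) = N" by (simp add: N_def)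
    show ?thesis
      by (simp only: sum.distrib sum_subtractf e1 e2 e3 e4 e5 c1[OF that(1)] c1[OF that(2)])
  qed
  have swap: "(\<Sum>b\<in>S. \<Sum>c\<in>S. dj a c * dj b c) = M * M" if "a \<in> S" for a
  proof -
    have "(\<Sum>b\<in>S. \<Sum>c\<in>S. dj a c * dj b c) = (\<Sum>c\<in>S. \<Sum>b\<in>S. dj a c * dj b c)"
      by (rule sum.swap)
    also have "\<dots> = (\<Sum>c\<in>S. dj a c * M)"
      by (intro sum.cong refl) (simp add: sum_distrib_left[symmetric] c2)
    also have "\<dots> = M * M" using c1[OF that] by (simp add: sum_distrib_right[symmetric])
    finally show ?thesis .
  qed
  have mid: "(\<Sum>b\<in>S. \<Sum>c\<in>S. 1 - dj a b - dj b c - dj a c + dj a b * dj b c + dj a b * dj a c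
            + dj a c * dj b c - dj a b * (dj a c * dj b c))
     = N*N - 3*N*M + 3*M*M - M*R" if "a \<in> S" for a
  proof -
    have "(\<Sum>b\<in>S. \<Sum>c\<in>S. 1 - dj a b - dj b c - dj a c + dj a b * dj b c + dj a b * dj a c
            + dj a c * dj b c - dj a b * (dj a c * dj b c))
      = (\<Sum>b\<in>S. N - N * dj a b - 2*M + 2 * dj a b * M + (\<Sum>c\<in>S. dj a c * dj b c) - dj a b * R)"
      using that by (intro sum.cong refl inner)
    also have "\<dots> = N*N - 3*N*M + 3*M*M - M*R"
      using c1[OF that] swap[OF that]
      by (simp add: sum.distrib sum_subtractf sum_distrib_left[symmetric] sum_distrib_right[symmetric] N_def algebra_simps)
    finally show ?thesis .
  qed
  show ?thesis
    using mid by (simp add: N_def)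
qed


lemma card_triples: "card {(i,j,k). 1 \<le> i \<and> i < j \<and> j < k \<and> k \<le> (n::nat)} = n choose 3"
proof -
  define T where "T = {(i,j,k). 1 \<le> i \<and> i < j \<and> j < k \<and> k \<le> (n::nat)}"
  define h where "h = (\<lambda>(i::nat,j::nat,k::nat). {i,j,k})"
  have inj: "inj_on h T"
  proof (rule inj_onI)
    fix x y assume x: "x \<in> T" and y: "y \<in> T" and e: "h x = h y"
    obtain i j k where xe: "x = (i,j,k)" by (cases x) auto
    obtain i' j' k' where ye: "y = (i',j',k')" by (cases y) auto
    have o: "i < j" "j < k" "i' < j'" "j' < k'" using x y xe ye by (auto simp: T_def)
    have s: "{i,j,k} = {i',j',k'}" using e xe ye by (simp add: h_def)
    have "i \<in> {i',j',k'}" "i' \<in> {i,j,k}" "k \<in> {i',j',k'}" "k' \<in> {i,j,k}" "j \<in> {i',j',k'}" "j' \<in> {i,j,k}"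
      using s by blast+
    then have "i = i' \<and> j = j' \<and> k = k'" using o by auto
    then show "x = y" using xe ye by simp
  qed
  have img: "h ` T = {A. A \<subseteq> {1..n} \<and> card A = 3}"
  proof (intro set_eqI iffI)
    fix A assume "A \<in> h ` T"
    then obtain i j k where "(i,j,k) \<in> T" "A = {i,j,k}" by (auto simp: h_def)
    then show "A \<in> {A. A \<subseteq> {1..n} \<and> card A = 3}" by (auto simp: T_def)
  next
    fix A assume A: "A \<in> {A. A \<subseteq> {1..n} \<and> card A = 3}"
    then have fA: "finite A" by (auto intro: finite_subset)
    define xs where "xs = sorted_list_of_set A"
    have l: "length xs = 3" using A fA by (simp add: xs_def)
    then obtain i j k where xs: "xs = [i,j,k]"
      by (auto simp: length_Suc_conv numeral_3_eq_3)
    have ss: "sorted_wrt (<) xs" by (simp add: xs_def)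
    have st: "set xs = A" using fA by (simp add: xs_def)
    have o: "i < j" "j < k" using ss xs by auto
    have Ae: "A = {i,j,k}" using st xs by auto
    have "(i,j,k) \<in> T" using A Ae o by (auto simp: T_def)
    then show "A \<in> h ` T" using Ae by (force simp: h_def)
  qed
  have "card T = card (h ` T)" using inj by (simp add: card_image)
  also have "\<dots> = n choose 3" by (simp add: img n_subsets)
  finally show ?thesis by (simp add: T_def)
qed


lemma chi_expect:
  fixes K P n :: nat
  assumes "1 \<le> K" and "K \<le> P" and "i \<in> {1..n}" "j \<in> {1..n}" "k \<in> {1..n}" "i \<noteq> j" "j \<noteq> k" "i \<noteq> k"
  shows "measure_pmf.expectation (key_rings_pmf n K P) (\<lambda>Ks. chi Ks i j k) = beta_rkg K P"
proof -
  define S where "S = {A. A \<subseteq> {1..P} \<and> card A = K}"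
  define N where "N = real (card S)"
  define M where "M = real ((P - K) choose K)"
  define R where "R = real ((P - 2*K) choose K)"
  define G where "G = (\<lambda>(a,b,c). 1 - dj a b - dj b c - dj a c + dj a b * dj b c + dj a b * dj a c
            + dj a c * dj b c - dj a b * (dj a c * dj b c))"
  have finS: "finite S" unfolding S_def by (rule finite_subset[of _ "Pow {1..P}"]) auto
  have "{1..K} \<in> S" using assms unfolding S_def by auto
  then have neS: "S \<noteq> {}" by auto
  have cardS: "card S = P choose K" unfolding S_def using n_subsets[of "{1..P}" K] by simp
  have Npos: "N > 0" unfolding N_def using finS neS by (simp add: card_gt_0_iff)
  have chiG: "chi Ks i j k = G (Ks i, Ks j, Ks k)" for Ks
    using assms by (simp add: chi_def rkg_adj_def G_def dj_def)
  have "measure_pmf.expectation (key_rings_pmf n K P) (\<lambda>Ks. chi Ks i j k)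
      = measure_pmf.expectation (map_pmf (\<lambda>f. (f i, f j, f k)) (Pi_pmf {1..n} {} (\<lambda>_. pmf_of_set S))) G"
    by (simp add: chiG key_rings_pmf_def key_ring_pmf_def S_def)
  also have "map_pmf (\<lambda>f. (f i, f j, f k)) (Pi_pmf {1..n} {} (\<lambda>_. pmf_of_set S)) = pmf_of_set (S \<times> S \<times> S)"
    using assms finS neS by (intro marg) auto
  also have "measure_pmf.expectation (pmf_of_set (S \<times> S \<times> S)) G = sum G (S \<times> S \<times> S) / card (S \<times> S \<times> S)"
    using finS neS by (intro integral_pmf_of_set) auto
  also have "sum G (S \<times> S \<times> S) = (\<Sum>a\<in>S. \<Sum>b\<in>S. \<Sum>c\<in>S. 1 - dj a b - dj b c - dj a c + dj a b * dj b c + dj a b * dj a c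
            + dj a c * dj b c - dj a b * (dj a c * dj b c))"
    by (simp add: G_def sum.cartesian_product)
  also have "\<dots> = N * (N*N - 3*N*M + 3*M*M - M*R)"
    unfolding S_def N_def M_def R_def by (rule triple_sum)
  also have "real (card (S \<times> S \<times> S)) = N * N * N"
    by (simp add: N_def card_cartesian_product)
  finally have E: "measure_pmf.expectation (key_rings_pmf n K P) (\<lambda>Ks. chi Ks i j k) = N * (N*N - 3*N*M + 3*M*M - M*R) / (N*N*N)" .
  have q: "q_rkg K P = M / N"
  proof (cases "2 * K \<le> P")
    case False
    then have "P - K < K" by auto
    then show ?thesis by (simp add: q_rkg_def M_def)
  qed (simp add: q_rkg_def M_def N_def cardS)
  have r: "r_rkg K P = R / N"
  proof (cases "3 * K \<le> P")
    case False
    then have "P - 2 * K < K" using assms by auto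
    then show ?thesis by (simp add: r_rkg_def R_def)
  qed (simp add: r_rkg_def R_def N_def cardS)
  have "beta_rkg K P = (1 - M/N)^3 + (M/N)^3 - (M/N) * (R/N)"
    by (simp add: beta_rkg_def q r)
  also have "\<dots> = N * (N*N - 3*N*M + 3*M*M - M*R) / (N*N*N)"
    using Npos by (simp add: field_simps power3_eq_cube)
  finally show ?thesis using E by simp
qed

theorem proposition1:
  fixes K P n :: nat
  assumes "1 \<le> K" and "K \<le> P" and "3 \<le> n"
  shows "measure_pmf.expectation (key_rings_pmf n K P) (\<lambda>Ks. chi Ks 1 2 3) = beta_rkg K P
       \<and> measure_pmf.expectation (key_rings_pmf n K P) (triangles n) = real (n choose 3) * beta_rkg K P"
proof
  show "measure_pmf.expectation (key_rings_pmf n K P) (\<lambda>Ks. chi Ks 1 2 3) = beta_rkg K P"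
    using assms by (intro chi_expect) auto
  define T where "T = {(i,j,k). 1 \<le> i \<and> i < j \<and> j < k \<and> k \<le> (n::nat)}"
  have finT: "finite T"
    by (rule finite_subset[of _ "{1..n} \<times> {1..n} \<times> {1..n}"]) (auto simp: T_def)
  have int: "integrable (measure_pmf (key_rings_pmf n K P)) (\<lambda>Ks. chi Ks i j k)" for i j k
    by (rule measure_pmf.integrable_const_bound[where B=1]) (auto simp: chi_def)
  have "measure_pmf.expectation (key_rings_pmf n K P) (triangles n)
      = measure_pmf.expectation (key_rings_pmf n K P) (\<lambda>Ks. \<Sum>t\<in>T. case t of (i,j,k) \<Rightarrow> chi Ks i j k)"
    by (simp add: triangles_def[abs_def] T_def)
  also have "\<dots> = (\<Sum>t\<in>T. measure_pmf.expectation (key_rings_pmf n K P) (\<lambda>Ks. case t of (i,j,k) \<Rightarrow> chi Ks i j k))"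
    by (rule Bochner_Integration.integral_sum[where f="\<lambda>t Ks. case t of (i,j,k) \<Rightarrow> chi Ks i j k"]) (auto split: prod.splits intro: int)
  also have "\<dots> = (\<Sum>t\<in>T. beta_rkg K P)"
  proof (intro sum.cong refl)
    fix t assume "t \<in> T"
    then obtain i j k where t: "t = (i,j,k)" "1 \<le> i" "i < j" "j < k" "k \<le> n" by (auto simp: T_def)
    show "measure_pmf.expectation (key_rings_pmf n K P) (\<lambda>Ks. case t of (i,j,k) \<Rightarrow> chi Ks i j k) = beta_rkg K P"
      using assms t by (simp, intro chi_expect) auto
  qed
  also have "\<dots> = real (n choose 3) * beta_rkg K P"
    using card_triples[of n] by (simp add: T_def)
  finally show "measure_pmf.expectation (key_rings_pmf n K P) (triangles n) = real (n choose 3) * beta_rkg K P" .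
qed

end
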